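(* Let $n\ge 3$, let $d_0,\dots,d_{n-1}>0$ (indices modulo $n$), let $\lambda\in(\tfrac14,1)$, and let $\beta_i$ and the $n\times n$ matrix $Q_n$ be as defined in the context. Let $P_i=\left(\cos\frac{2i\pi}{n},\sin\frac{2i\pi}{n}\right)\in\mathbb{R}^2$ for $i=0,\dots,n-1$, let $C_P=\sum_{i=0}^{n-1}\beta_iP_i$, and let $P-C_P$ denote the $n\times 2$ matrix whose $i$-th row is $P_i-C_P$. Then $$Q_n(P-C_P)=\lambda(P-C_P),$$ i.e. for every $j$, $\sum_{i=0}^{n-1}Q_{j,i}(P_i-C_P)=\lambda(P_j-C_P)$.
   Context: $\alpha_j=\frac{1}{n}\frac{d_{j-1}d_{j+2}}{(d_{j-1}+d_{j+1})(d_j+d_{j+2})}$, $\beta_i=\frac{d_{i-1}(d_{i-2}+d_{i+2})+d_{i+2}(d_{i-1}+d_{i+3})}{\sum_{k=0}^{n-1}(d_k+d_{k+2})(d_{k-1}+d_{k+3})}$, and $Q_n=(Q_{i,j})_{i,j=0}^{n-1}$ with $Q_{i,j}=(1-\lambda)\beta_j+2\lambda\alpha_i(1+2\cos\frac{2(j-i)\pi}{n})$ for $j\ne i$ and $Q_{i,i}=\lambda+(1-\lambda)\beta_i-2(n-3)\lambda\alpha_i$. Equivalently, the rule is $\overline P_j=(1-\lambda)C+\lambda P_j+2\lambda\alpha_j\big(-nP_j+\sum_{i}(1+2\cos\frac{2(j-i)\pi}{n})P_i\big)$ with $C=\sum_i\beta_iP_i$. *)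

theory Defs
  imports "HOL-Analysis.Analysis"
begin

definition dm :: "nat \<Rightarrow> (nat \<Rightarrow> real) \<Rightarrow> int \<Rightarrow> real" where
  "dm n d k = d (nat (k mod int n))"

definition alpha :: "nat \<Rightarrow> (nat \<Rightarrow> real) \<Rightarrow> nat \<Rightarrow> real" where
  "alpha n d j = (1 / real n) *
     (dm n d (int j - 1) * dm n d (int j + 2)) /
     ((dm n d (int j - 1) + dm n d (int j + 1)) * (dm n d (int j) + dm n d (int j + 2)))"

definition beta :: "nat \<Rightarrow> (nat \<Rightarrow> real) \<Rightarrow> nat \<Rightarrow> real" where
  "beta n d i =
     (dm n d (int i - 1) * (dm n d (int i - 2) + dm n d (int i + 2))
      + dm n d (int i + 2) * (dm n d (int i - 1) + dm n d (int i + 3)))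
     / (\<Sum>k<n. (dm n d (int k) + dm n d (int k + 2)) * (dm n d (int k - 1) + dm n d (int k + 3)))"

definition Qmat :: "nat \<Rightarrow> (nat \<Rightarrow> real) \<Rightarrow> real \<Rightarrow> nat \<Rightarrow> nat \<Rightarrow> real" where
  "Qmat n d lam i j =
     (if j \<noteq> i then (1 - lam) * beta n d j
        + 2 * lam * alpha n d i * (1 + 2 * cos (2 * (real j - real i) * pi / real n))
      else lam + (1 - lam) * beta n d i - 2 * (real n - 3) * lam * alpha n d i)"

definition Ppt :: "nat \<Rightarrow> nat \<Rightarrow> real \<times> real" where
  "Ppt n i = (cos (2 * real i * pi / real n), sin (2 * real i * pi / real n))"

definition CP :: "nat \<Rightarrow> (nat \<Rightarrow> real) \<Rightarrow> real \<times> real" where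
  "CP n d = (\<Sum>i<n. beta n d i *\<^sub>R Ppt n i)"

end

theory Submission
  imports Defs
begin

lemma cis_sum_zero:
  fixes n k :: nat assumes "0 < k" "k < n"
  shows "(\<Sum>i<n. cis (2 * real k * real i * pi / real n + c)) = 0"
proof -
  define w where "w = cis (2 * real k * pi / real n)"
  have n0: "real n > 0" using assms by simp
  have pw: "cis (2 * real k * real i * pi / real n + c) = cis c * w ^ i" for i
  proof -
    have "w ^ i = cis (2 * real k * real i * pi / real n)" unfolding w_def by (subst Complex.DeMoivre) (simp add: algebra_simps)
    thus ?thesis by (simp add: cis_mult algebra_simps)
  qed
  have wn: "w ^ n = 1" unfolding w_def Complex.DeMoivre
  proof -
    have "real n * (2 * real k * pi / real n) = 2 * pi * real k" using n0 by simp
    thus "cis (real n * (2 * real k * pi / real n)) = 1" by (simp add: cis_multiple_2pi)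
  qed
  have w1: "w \<noteq> 1"
  proof
    assume "w = 1"
    hence "Re w = 1" by simp
    hence "cos (2 * real k * pi / real n) = 1" unfolding w_def by simp
    then obtain m :: int where m: "2 * real k * pi / real n = real_of_int m * 2 * pi"
      using cos_one_2pi_int by blast
    hence "real k / real n = real_of_int m" using n0 by (simp add: field_simps)
    moreover have "0 < real k / real n" "real k / real n < 1" using assms n0 by auto
    ultimately have "0 < real_of_int m" "real_of_int m < 1" by auto
    hence "0 < m" "m < 1" by simp_all
    thus False by simp
  qed
  have "(\<Sum>i<n. cis (2 * real k * real i * pi / real n + c)) = cis c * (\<Sum>i<n. w ^ i)"
    by (simp add: pw sum_distrib_left)
  also have "\<dots> = 0" using geometric_sum[OF w1, of n] wn by simp
  finally show ?thesis .
qed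

lemma cos_sum_zero:
  fixes n k :: nat assumes "0 < k" "k < n"
  shows "(\<Sum>i<n. cos (2 * real k * real i * pi / real n + c)) = 0"
    and "(\<Sum>i<n. sin (2 * real k * real i * pi / real n + c)) = 0"
proof -
  have "Re (\<Sum>i<n. cis (2 * real k * real i * pi / real n + c)) = 0"
       "Im (\<Sum>i<n. cis (2 * real k * real i * pi / real n + c)) = 0"
    using cis_sum_zero[OF assms] by simp_all
  thus "(\<Sum>i<n. cos (2 * real k * real i * pi / real n + c)) = 0"
    "(\<Sum>i<n. sin (2 * real k * real i * pi / real n + c)) = 0"
    by (simp_all add: Re_sum Im_sum)
qed
lemma key_alg:
  fixes x b g :: "nat \<Rightarrow> real" and n j :: nat and a lam :: real
  assumes "j < n" "(\<Sum>i<n. b i) = 1" "(\<Sum>i<n. g i) = 0" "(\<Sum>i<n. x i) = 0"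
    "(\<Sum>i<n. g i * x i) = real n / 2 * x j" "c = (\<Sum>i<n. b i * x i)"
  shows "(\<Sum>i<n. ((1 - lam) * b i + 2 * lam * a * (1 + 2 * g i)
            + (if i = j then lam - 2 * real n * lam * a else 0)) * (x i - c))
         = lam * (x j - c)"
proof -
  let ?A = "\<lambda>i. (1 - lam) * b i + 2 * lam * a * (1 + 2 * g i)
            + (if i = j then lam - 2 * real n * lam * a else 0)"
  have s1: "(\<Sum>i<n. ?A i) = 1"
  proof -
    have "(\<Sum>i<n. ?A i) = (1 - lam) * (\<Sum>i<n. b i) + (2 * lam * a * real n + 4 * lam * a * (\<Sum>i<n. g i))
       + (\<Sum>i<n. (if i = j then lam - 2 * real n * lam * a else 0))"
      by (simp add: sum.distrib sum_subtractf ring_distribs sum_distrib_left mult.assoc)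
    also have "\<dots> = 1" using assms(1-3) by simp
    finally show ?thesis .
  qed
  have s2: "(\<Sum>i<n. ?A i * x i) = (1 - lam) * c + lam * x j"
  proof -
    have e1: "(\<Sum>i<n. ?A i * x i) = (1 - lam) * (\<Sum>i<n. b i * x i) + (2 * lam * a * (\<Sum>i<n. x i) + 4 * lam * a * (\<Sum>i<n. g i * x i))
       + (\<Sum>i<n. (if i = j then (lam - 2 * real n * lam * a) else 0) * x i)"
      by (simp only: sum.distrib sum_subtractf ring_distribs sum_distrib_left mult.assoc mult_1_left) (simp add: mult_ac)
    have e2: "(\<Sum>i<n. (if i = j then (lam - 2 * real n * lam * a) else 0) * x i) = (lam - 2 * real n * lam * a) * x j"
      using assms(1) by (simp add: if_distrib[of "\<lambda>t. t * _"] cong: if_cong)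
    show ?thesis unfolding e1 e2 using assms(1,4,5,6) by (simp add: algebra_simps)
  qed
  have "(\<Sum>i<n. ?A i * (x i - c)) = (\<Sum>i<n. ?A i * x i) - c * (\<Sum>i<n. ?A i)"
    unfolding sum_distrib_left sum_subtractf[symmetric] by (rule sum.cong) (simp_all add: algebra_simps)
  also have "\<dots> = lam * (x j - c)" using s1 s2 by (simp add: algebra_simps)
  finally show ?thesis .
qed

lemma dm_pos: assumes "0 < n" "\<And>i. i < n \<Longrightarrow> d i > 0" shows "dm n d k > 0"
proof -
  have "nat (k mod int n) < n" using assms(1)
    by (metis int_ops(1) nat_less_iff of_nat_0_less_iff pos_mod_bound pos_mod_sign)
  thus ?thesis unfolding dm_def using assms(2) by blast
qed

lemma dm_shift:
  assumes "0 < n"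
  shows "(\<Sum>i<n. G (\<lambda>t. dm n d (int i + t))) = (\<Sum>i<n. G (\<lambda>t. dm n d (int i + s + t)))"
proof -
  define \<sigma> where "\<sigma> i = nat ((int i + s) mod int n)" for i
  define \<tau> where "\<tau> k = nat ((int k - s) mod int n)" for k
  have bij: "bij_betw \<sigma> {..<n} {..<n}"
  proof (rule bij_betw_byWitness[where f' = \<tau>])
    show "\<forall>a\<in>{..<n}. \<tau> (\<sigma> a) = a"
    proof
      fix a assume "a \<in> {..<n}"
      hence "int a mod int n = int a" by simp
      moreover have "\<tau> (\<sigma> a) = nat ((((int a + s) mod int n) - s) mod int n)"
        unfolding \<tau>_def \<sigma>_def using assms by simp
      moreover have "(((int a + s) mod int n) - s) mod int n = int a mod int n"
        by (simp add: mod_diff_left_eq)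
      ultimately show "\<tau> (\<sigma> a) = a" by simp
    qed
    show "\<forall>a\<in>{..<n}. \<sigma> (\<tau> a) = a"
    proof
      fix a assume "a \<in> {..<n}"
      hence "int a mod int n = int a" by simp
      moreover have "\<sigma> (\<tau> a) = nat ((((int a - s) mod int n) + s) mod int n)"
        unfolding \<tau>_def \<sigma>_def using assms by simp
      moreover have "(((int a - s) mod int n) + s) mod int n = int a mod int n"
        by (simp add: mod_add_left_eq)
      ultimately show "\<sigma> (\<tau> a) = a" by simp
    qed
    show "\<sigma> ` {..<n} \<subseteq> {..<n}" unfolding \<sigma>_def using assms
      by (auto simp: nat_less_iff)
    show "\<tau> ` {..<n} \<subseteq> {..<n}" unfolding \<tau>_def using assms
      by (auto simp: nat_less_iff)
  qed
  have eq: "dm n d (int (\<sigma> i) + t) = dm n d (int i + s + t)" for i t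
  proof -
    have "int (\<sigma> i) = (int i + s) mod int n" unfolding \<sigma>_def using assms by simp
    hence "(int (\<sigma> i) + t) mod int n = (int i + s + t) mod int n"
      by (simp add: mod_add_left_eq)
    thus ?thesis unfolding dm_def by simp
  qed
  have "(\<Sum>i<n. G (\<lambda>t. dm n d (int i + s + t))) = (\<Sum>i<n. G (\<lambda>t. dm n d (int (\<sigma> i) + t)))"
    by (simp add: eq)
  also have "\<dots> = (\<Sum>i<n. G (\<lambda>t. dm n d (int i + t)))"
    using sum.reindex_bij_betw[OF bij, of "\<lambda>i. G (\<lambda>t. dm n d (int i + t))"] by simp
  finally show ?thesis by simp
qed

lemma beta_sum:
  assumes "0 < n" "\<And>i. i < n \<Longrightarrow> d i > 0"
  shows "(\<Sum>i<n. beta n d i) = 1"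
proof -
  let ?D = "\<Sum>k<n. (dm n d (int k) + dm n d (int k + 2)) * (dm n d (int k - 1) + dm n d (int k + 3))"
  have pos: "\<And>k. dm n d k > 0" using dm_pos[OF assms] .
  have Dpos: "?D > 0"
    using assms(1) by (intro sum_pos) (auto intro!: mult_pos_pos add_pos_pos pos)
  have h1: "(\<Sum>i<n. dm n d (int i - 1) * dm n d (int i - 2)) = (\<Sum>i<n. dm n d (int i) * dm n d (int i - 1))"
    using dm_shift[OF assms(1), of "\<lambda>f. f 0 * f (-1)" d "-1"] by (simp add: algebra_simps)
  have h2: "(\<Sum>i<n. dm n d (int i - 1) * dm n d (int i + 2)) = (\<Sum>i<n. dm n d (int i) * dm n d (int i + 3))"
    using dm_shift[OF assms(1), of "\<lambda>f. f 0 * f 3" d "-1"] by (simp add: algebra_simps)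
  have num: "(\<Sum>i<n. dm n d (int i - 1) * (dm n d (int i - 2) + dm n d (int i + 2))
      + dm n d (int i + 2) * (dm n d (int i - 1) + dm n d (int i + 3))) = ?D"
  proof -
    have "(\<Sum>i<n. dm n d (int i - 1) * (dm n d (int i - 2) + dm n d (int i + 2))
      + dm n d (int i + 2) * (dm n d (int i - 1) + dm n d (int i + 3)))
      = (\<Sum>i<n. dm n d (int i - 1) * dm n d (int i - 2)) + (\<Sum>i<n. dm n d (int i - 1) * dm n d (int i + 2))
        + (\<Sum>i<n. dm n d (int i + 2) * dm n d (int i - 1) + dm n d (int i + 2) * dm n d (int i + 3))"
      unfolding sum.distrib[symmetric] by (rule sum.cong) (simp_all add: algebra_simps)
    also have "\<dots> = (\<Sum>i<n. dm n d (int i) * dm n d (int i - 1)) + (\<Sum>i<n. dm n d (int i) * dm n d (int i + 3))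
        + (\<Sum>i<n. dm n d (int i + 2) * dm n d (int i - 1) + dm n d (int i + 2) * dm n d (int i + 3))"
      using h1 h2 by simp
    also have "\<dots> = ?D"
      unfolding sum.distrib[symmetric] by (rule sum.cong) (simp_all add: algebra_simps)
    finally show ?thesis .
  qed
  show ?thesis unfolding beta_def sum_divide_distrib[symmetric] num using Dpos by simp
qed

lemma cos_prod: "cos (u::real) * cos v = (cos (u + v) + cos (u - v)) / 2"
  by (simp add: cos_add cos_diff)
lemma cos_sin_prod: "cos (u::real) * sin v = (sin (v + u) + sin (v - u)) / 2"
  by (simp add: sin_add sin_diff)

theorem lemma3:
  fixes n :: nat and d :: "nat \<Rightarrow> real" and lam :: real
  assumes "n \<ge> 3"
    and "\<And>i. i < n \<Longrightarrow> d i > 0"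
    and "1/4 < lam" and "lam < 1"
  shows "\<forall>j<n. (\<Sum>i<n. Qmat n d lam j i *\<^sub>R (Ppt n i - CP n d))
                 = lam *\<^sub>R (Ppt n j - CP n d)"
proof (intro allI impI)
  fix j assume j: "j < n"
  have n0: "0 < n" using assms(1) by simp
  have nr: "real n > 0" using n0 by simp
  define th where "th i = 2 * real i * pi / real n" for i
  define g where "g i = cos (2 * (real i - real j) * pi / real n)" for i
  define a where "a = alpha n d j"
  have gth: "2 * (real i - real j) * pi / real n = th i - th j" for i
    using nr unfolding th_def by (simp add: field_simps)
  have Q: "Qmat n d lam j i = (1 - lam) * beta n d i + 2 * lam * a * (1 + 2 * g i)
            + (if i = j then lam - 2 * real n * lam * a else 0)" for i
    unfolding Qmat_def g_def a_def by (auto simp: algebra_simps)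
  have bs: "(\<Sum>i<n. beta n d i) = 1" using beta_sum[OF n0 assms(2)] .
  have k1: "0 < (1::nat)" "1 < n" and k2: "0 < (2::nat)" "2 < n" using assms(1) by auto
  have gs: "(\<Sum>i<n. g i) = 0"
  proof -
    have "g i = cos (2 * real (1::nat) * real i * pi / real n + (- th j))" for i
      unfolding g_def gth by (simp add: th_def)
    thus ?thesis using cos_sum_zero(1)[OF k1, of "- th j"] by simp
  qed
  have xs: "(\<Sum>i<n. cos (th i)) = 0" "(\<Sum>i<n. sin (th i)) = 0"
    using cos_sum_zero[OF k1, of 0] by (simp_all add: th_def)
  have 2: "2 * th i - th j = 2 * real (2::nat) * real i * pi / real n + (- th j)" for i
    using nr unfolding th_def by (simp add: field_simps)
  have gx: "(\<Sum>i<n. g i * cos (th i)) = real n / 2 * cos (th j)"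
  proof -
    have pw: "g i * cos (th i) = (cos (2 * th i - th j) + cos (th j)) / 2" for i
      unfolding g_def gth cos_prod by (simp add: algebra_simps)
    have "(\<Sum>i<n. g i * cos (th i)) = (\<Sum>i<n. (cos (2 * th i - th j) + cos (th j)) / 2)"
      by (rule sum.cong[OF refl pw])
    also have "\<dots> = ((\<Sum>i<n. cos (2 * th i - th j)) + real n * cos (th j)) / 2"
      by (simp only: sum_divide_distrib[symmetric] sum.distrib) simp
    also have "(\<Sum>i<n. cos (2 * th i - th j)) = 0"
      unfolding 2 using cos_sum_zero(1)[OF k2, of "- th j"] by simp
    finally show ?thesis by simp
  qed
  have gy: "(\<Sum>i<n. g i * sin (th i)) = real n / 2 * sin (th j)"
  proof -
    have pw: "g i * sin (th i) = (sin (2 * th i - th j) + sin (th j)) / 2" for i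
      unfolding g_def gth cos_sin_prod by (simp add: algebra_simps)
    have "(\<Sum>i<n. g i * sin (th i)) = (\<Sum>i<n. (sin (2 * th i - th j) + sin (th j)) / 2)"
      by (rule sum.cong[OF refl pw])
    also have "\<dots> = ((\<Sum>i<n. sin (2 * th i - th j)) + real n * sin (th j)) / 2"
      by (simp only: sum_divide_distrib[symmetric] sum.distrib) simp
    also have "(\<Sum>i<n. sin (2 * th i - th j)) = 0"
      unfolding 2 using cos_sum_zero(2)[OF k2, of "- th j"] by simp
    finally show ?thesis by simp
  qed
  have P: "Ppt n i = (cos (th i), sin (th i))" for i unfolding Ppt_def th_def by simp
  have C1: "fst (CP n d) = (\<Sum>i<n. beta n d i * cos (th i))"
    and C2: "snd (CP n d) = (\<Sum>i<n. beta n d i * sin (th i))"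
    unfolding CP_def P by (simp_all add: fst_sum snd_sum)
  have e1: "(\<Sum>i<n. Qmat n d lam j i * (cos (th i) - fst (CP n d))) = lam * (cos (th j) - fst (CP n d))"
    unfolding Q by (rule key_alg[OF j bs gs xs(1) gx C1])
  have e2: "(\<Sum>i<n. Qmat n d lam j i * (sin (th i) - snd (CP n d))) = lam * (sin (th j) - snd (CP n d))"
    unfolding Q by (rule key_alg[OF j bs gs xs(2) gy C2])
  show "(\<Sum>i<n. Qmat n d lam j i *\<^sub>R (Ppt n i - CP n d)) = lam *\<^sub>R (Ppt n j - CP n d)"
    using e1 e2 by (simp add: prod_eq_iff fst_sum snd_sum P)
qed

end
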